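(* Let $G$ be a maximal $3$-$\gamma_{c}$-vertex critical graph, with independence number $\alpha$ and minimum degree $\delta$. Then $\alpha \leq \delta$.
   Context: All graphs are finite, simple and connected. A set $D\subseteq V(G)$ is a connected dominating set of $G$ if every vertex of $G$ is in $D$ or adjacent to a vertex of $D$, and $G[D]$ is connected. The connected domination number $\gamma_{c}(G)$ is the minimum cardinality of a connected dominating set. A graph $G$ is $k$-$\gamma_{c}$-edge critical if $\gamma_{c}(G)=k$ and $\gamma_{c}(G+uv)<k$ for every pair of non-adjacent vertices $u,v$. A $2$-connected graph $G$ is $k$-$\gamma_{c}$-vertex critical if $\gamma_{c}(G)=k$ and $\gamma_{c}(G-v)<k$ for every $v\in V(G)$. A graph is maximal $k$-$\gamma_{c}$-vertex critical if it is both $k$-$\gamma_{c}$-edge critical and $k$-$\gamma_{c}$-vertex critical. *)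

theory Defs
  imports Main
begin

definition simple_graph :: "'a set \<Rightarrow> 'a set set \<Rightarrow> bool" where
  "simple_graph V E \<longleftrightarrow> finite V \<and> (\<forall>e\<in>E. \<exists>u v. u \<in> V \<and> v \<in> V \<and> u \<noteq> v \<and> e = {u, v})"

definition adj :: "'a set set \<Rightarrow> 'a \<Rightarrow> 'a \<Rightarrow> bool" where
  "adj E u v \<longleftrightarrow> {u, v} \<in> E \<and> u \<noteq> v"

definition walk_in :: "'a set set \<Rightarrow> 'a set \<Rightarrow> 'a list \<Rightarrow> bool" where
  "walk_in E S p \<longleftrightarrow> p \<noteq> [] \<and> set p \<subseteq> S \<and> (\<forall>i. Suc i < length p \<longrightarrow> adj E (p ! i) (p ! Suc i))"

definition connected_on :: "'a set set \<Rightarrow> 'a set \<Rightarrow> bool" where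
  "connected_on E S \<longleftrightarrow> S \<noteq> {} \<and>
     (\<forall>u\<in>S. \<forall>v\<in>S. \<exists>p. walk_in E S p \<and> hd p = u \<and> last p = v)"

definition connected_graph :: "'a set \<Rightarrow> 'a set set \<Rightarrow> bool" where
  "connected_graph V E \<longleftrightarrow> simple_graph V E \<and> connected_on E V"

definition dominating :: "'a set \<Rightarrow> 'a set set \<Rightarrow> 'a set \<Rightarrow> bool" where
  "dominating V E D \<longleftrightarrow> D \<subseteq> V \<and> (\<forall>v\<in>V. v \<in> D \<or> (\<exists>d\<in>D. adj E v d))"

definition connected_dominating :: "'a set \<Rightarrow> 'a set set \<Rightarrow> 'a set \<Rightarrow> bool" where
  "connected_dominating V E D \<longleftrightarrow> dominating V E D \<and> connected_on E D"

definition gamma_c :: "'a set \<Rightarrow> 'a set set \<Rightarrow> nat" where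
  "gamma_c V E = (LEAST k. \<exists>D. connected_dominating V E D \<and> card D = k)"

definition del_vertex_edges :: "'a set set \<Rightarrow> 'a \<Rightarrow> 'a set set" where
  "del_vertex_edges E v = {e \<in> E. v \<notin> e}"

definition two_connected :: "'a set \<Rightarrow> 'a set set \<Rightarrow> bool" where
  "two_connected V E \<longleftrightarrow> connected_graph V E \<and> card V \<ge> 3 \<and>
     (\<forall>v\<in>V. connected_graph (V - {v}) (del_vertex_edges E v))"

definition edge_critical :: "nat \<Rightarrow> 'a set \<Rightarrow> 'a set set \<Rightarrow> bool" where
  "edge_critical k V E \<longleftrightarrow> connected_graph V E \<and> gamma_c V E = k \<and>
     (\<forall>u\<in>V. \<forall>v\<in>V. u \<noteq> v \<and> \<not> adj E u v \<longrightarrow> gamma_c V (insert {u, v} E) < k)"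

definition vertex_critical :: "nat \<Rightarrow> 'a set \<Rightarrow> 'a set set \<Rightarrow> bool" where
  "vertex_critical k V E \<longleftrightarrow> two_connected V E \<and> gamma_c V E = k \<and>
     (\<forall>v\<in>V. gamma_c (V - {v}) (del_vertex_edges E v) < k)"

definition maximal_vertex_critical :: "nat \<Rightarrow> 'a set \<Rightarrow> 'a set set \<Rightarrow> bool" where
  "maximal_vertex_critical k V E \<longleftrightarrow> edge_critical k V E \<and> vertex_critical k V E"

definition independent :: "'a set \<Rightarrow> 'a set set \<Rightarrow> 'a set \<Rightarrow> bool" where
  "independent V E I \<longleftrightarrow> I \<subseteq> V \<and> (\<forall>u\<in>I. \<forall>v\<in>I. \<not> adj E u v)"

definition independence_number :: "'a set \<Rightarrow> 'a set set \<Rightarrow> nat" where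
  "independence_number V E = Max {card I | I. independent V E I}"

definition degree :: "'a set \<Rightarrow> 'a set set \<Rightarrow> 'a \<Rightarrow> nat" where
  "degree V E v = card {u \<in> V. adj E v u}"

definition min_degree :: "'a set \<Rightarrow> 'a set set \<Rightarrow> nat" where
  "min_degree V E = Min (degree V E ` V)"

end

theory Submission
  imports Defs
begin

lemma adj_sym: "adj E u v = adj E v u"
  by (auto simp: adj_def insert_commute)

lemma adj_irr: "\<not> adj E u u"
  by (simp add: adj_def)

locale mvc =
  fixes V :: "'a set" and E :: "'a set set"
  assumes fin: "finite V"
  and G2: "\<And>a b. a\<in>V \<Longrightarrow> b\<in>V \<Longrightarrow> a = b \<or> adj E a b \<Longrightarrow>
              \<exists>x\<in>V. x\<noteq>a \<and> x\<noteq>b \<and> \<not>adj E x a \<and> \<not>adj E x b"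
  and VC: "\<And>v. v\<in>V \<Longrightarrow> \<exists>a\<in>V. \<exists>b\<in>V. adj E a b \<and> a\<noteq>v \<and> b\<noteq>v \<and> \<not>adj E a v \<and> \<not>adj E b v \<and>
              (\<forall>x\<in>V. x\<noteq>v \<longrightarrow> x=a \<or> x=b \<or> adj E x a \<or> adj E x b)"
  and EC: "\<And>u v. u\<in>V \<Longrightarrow> v\<in>V \<Longrightarrow> u\<noteq>v \<Longrightarrow> \<not>adj E u v \<Longrightarrow>
              (\<forall>x\<in>V. x=u \<or> x=v \<or> adj E x u \<or> adj E x v) \<or>
              (\<exists>t\<in>V. adj E u t \<and> \<not>adj E v t \<and> (\<forall>x\<in>V. x\<noteq>v \<longrightarrow> x=u \<or> x=t \<or> adj E x u \<or> adj E x t)) \<or>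
              (\<exists>t\<in>V. adj E v t \<and> \<not>adj E u t \<and> (\<forall>x\<in>V. x\<noteq>u \<longrightarrow> x=v \<or> x=t \<or> adj E x v \<or> adj E x t))"
  and NB: "\<And>v. v\<in>V \<Longrightarrow> \<exists>u\<in>V. adj E v u"
begin

lemma F1:
  assumes "y\<in>V" "t\<in>V" "adj E y t"
  shows "\<exists>x\<in>V. adj E y x \<and> x\<noteq>t \<and> \<not>adj E x t"
proof -
  obtain a b where ab: "a\<in>V" "b\<in>V" "adj E a b" "a\<noteq>t" "b\<noteq>t" "\<not>adj E a t" "\<not>adj E b t"
    and d: "\<forall>x\<in>V. x\<noteq>t \<longrightarrow> x=a \<or> x=b \<or> adj E x a \<or> adj E x b"
    using VC[OF assms(2)] by blast
  have "y \<noteq> t" using assms(3) adj_irr by metis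
  then have "y=a \<or> y=b \<or> adj E y a \<or> adj E y b" using d assms(1) by blast
  moreover have "y\<noteq>a" using ab(6) assms(3) adj_sym by metis
  moreover have "y\<noteq>b" using ab(7) assms(3) adj_sym by metis
  ultimately show ?thesis using ab by blast
qed

lemma one:
  assumes y: "y\<in>V" and z: "z\<in>V" "z\<noteq>y" "\<not>adj E y z"
    and nz: "\<forall>k\<in>V. adj E y k \<longrightarrow> \<not>adj E k z"
    and ni: "\<forall>k\<in>V. \<forall>k'\<in>V. adj E y k \<longrightarrow> adj E y k' \<longrightarrow> \<not>adj E k k'"
  shows False
proof -
  have Q: "\<not>(\<forall>x\<in>V. x\<noteq>z \<longrightarrow> x=y \<or> x=k \<or> adj E x y \<or> adj E x k)"
    if k: "k\<in>V" "adj E y k" for k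
  proof
    assume dom: "\<forall>x\<in>V. x\<noteq>z \<longrightarrow> x=y \<or> x=k \<or> adj E x y \<or> adj E x k"
    obtain a b where ab: "a\<in>V" "b\<in>V" "adj E a b" "a\<noteq>k" "b\<noteq>k" "\<not>adj E a k" "\<not>adj E b k"
      and d: "\<forall>x\<in>V. x\<noteq>k \<longrightarrow> x=a \<or> x=b \<or> adj E x a \<or> adj E x b"
      using VC[OF k(1)] by blast
    have yk: "y\<noteq>k" using k(2) adj_irr by metis
    have ya: "y\<noteq>a" using ab(6) k(2) adj_sym by metis
    have yb: "y\<noteq>b" using ab(7) k(2) adj_sym by metis
    have "adj E y a \<or> adj E y b" using d y yk ya yb by blast
    then show False
    proof
      assume ya': "adj E y a"
      have "\<not>adj E y b" using ni ya' ab(1,2,3) by blast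
      moreover have "b\<noteq>z" using nz ya' ab(1,3) by blast
      ultimately show False using dom ab(2,5,7) yb adj_sym by metis
    next
      assume yb': "adj E y b"
      have "\<not>adj E y a" using ni yb' ab(1,2,3) adj_sym by metis
      moreover have "a\<noteq>z" using nz yb' ab(2,3) adj_sym by metis
      ultimately show False using dom ab(1,4,6) ya adj_sym by metis
    qed
  qed
  have zy: "\<not>adj E z y" using z(3) adj_sym by metis
  from EC[OF y z(1) z(2)[symmetric] z(3)] show False
  proof (elim disjE)
    assume all: "\<forall>x\<in>V. x=y \<or> x=z \<or> adj E x y \<or> adj E x z"
    obtain a b where ab: "a\<in>V" "b\<in>V" "adj E a b" "a\<noteq>z" "b\<noteq>z" "\<not>adj E a z" "\<not>adj E b z"
      and d: "\<forall>x\<in>V. x\<noteq>z \<longrightarrow> x=a \<or> x=b \<or> adj E x a \<or> adj E x b"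
      using VC[OF z(1)] by blast
    show False
    proof (cases "y=a")
      case True
      then show False using Q[of b] ab d adj_sym by metis
    next
      case ya: False
      show False
      proof (cases "y=b")
        case True
        then show False using Q[of a] ab d adj_sym by metis
      next
        case yb: False
        have "adj E y a \<or> adj E y b" using d y z(2)[symmetric] ya yb by blast
        then show False
        proof
          assume ya': "adj E y a"
          have "\<not>adj E y b" using ni ya' ab(1,2,3) by blast
          then show False using all ab(2,5,7) yb adj_sym by metis
        next
          assume yb': "adj E y b"
          have "\<not>adj E y a" using ni yb' ab(1,2,3) adj_sym by metis
          then show False using all ab(1,4,6) ya adj_sym by metis
        qed
      qed
    qed
  next
    assume "\<exists>t\<in>V. adj E y t \<and> \<not>adj E z t \<and> (\<forall>x\<in>V. x\<noteq>z \<longrightarrow> x=y \<or> x=t \<or> adj E x y \<or> adj E x t)"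
    then show False using Q by blast
  next
    assume "\<exists>s\<in>V. adj E z s \<and> \<not>adj E y s \<and> (\<forall>x\<in>V. x\<noteq>y \<longrightarrow> x=z \<or> x=s \<or> adj E x z \<or> adj E x s)"
    then obtain s where s: "s\<in>V" "adj E z s" "\<not>adj E y s"
      and ds: "\<forall>x\<in>V. x\<noteq>y \<longrightarrow> x=z \<or> x=s \<or> adj E x z \<or> adj E x s" by blast
    have ys: "y\<noteq>s" using s(2) zy by metis
    have Ks: "adj E k s" if "k\<in>V" "adj E y k" for k
    proof -
      have "k\<noteq>y" using that(2) adj_irr by metis
      then have "k=z \<or> k=s \<or> adj E k z \<or> adj E k s" using ds that(1) by blast
      moreover have "k\<noteq>z" using that(2) z(3) by metis
      moreover have "k\<noteq>s" using that(2) s(3) by metis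
      moreover have "\<not>adj E k z" using nz that by blast
      ultimately show ?thesis by blast
    qed
    obtain a b where ab: "a\<in>V" "b\<in>V" "adj E a b" "a\<noteq>s" "b\<noteq>s" "\<not>adj E a s" "\<not>adj E b s"
      and d: "\<forall>x\<in>V. x\<noteq>s \<longrightarrow> x=a \<or> x=b \<or> adj E x a \<or> adj E x b"
      using VC[OF s(1)] by blast
    have "y=a \<or> y=b \<or> adj E y a \<or> adj E y b" using d y ys by blast
    then show False
    proof (elim disjE)
      assume "y=a" then show False using Ks[of b] ab by blast
    next
      assume "y=b" then show False using Ks[of a] ab adj_sym by metis
    next
      assume "adj E y a" then show False using Ks[of a] ab by blast
    next
      assume "adj E y b" then show False using Ks[of b] ab by blast
    qed
  qed
qed

lemma main:
  assumes y: "y\<in>V" and ind: "independent V E I"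
  shows "card I \<le> card {u\<in>V. adj E y u}"
proof (rule ccontr)
  assume contra: "\<not> ?thesis"
  define Ny where "Ny = {u\<in>V. adj E y u}"
  have IV: "I \<subseteq> V" and indep: "\<And>u v. u\<in>I \<Longrightarrow> v\<in>I \<Longrightarrow> \<not>adj E u v"
    using ind unfolding independent_def by auto
  define K where "K = I \<inter> Ny"
  define J where "J = I - Ny - {y}"
  have finI: "finite I" using IV fin finite_subset by blast
  have finNy: "finite Ny" unfolding Ny_def using fin by simp
  have finJ: "finite J" unfolding J_def using finI by simp
  have finK: "finite K" unfolding K_def using finI by simp
  have yNy: "y \<notin> Ny" unfolding Ny_def by (simp add: adj_irr)
  have NyV: "Ny \<subseteq> V" unfolding Ny_def by auto
  have Jp: "z\<in>V \<and> z\<noteq>y \<and> y\<noteq>z \<and> \<not>adj E y z \<and> z\<in>I \<and> z\<notin>Ny" if "z\<in>J" for z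
    using that IV unfolding J_def Ny_def by auto
  define Miss where "Miss w = {t\<in>Ny - I. \<not>adj E t w \<and> (\<forall>i\<in>J. i\<noteq>w \<longrightarrow> adj E t i)}" for w
  have Miss_disj: "w=w'" if "w\<in>J" "w'\<in>J" "t\<in>Miss w" "t\<in>Miss w'" for w w' t
    using that unfolding Miss_def by blast
  define Z0 where "Z0 = {w\<in>J. Miss w \<noteq> {}}"
  have Z0J: "Z0 \<subseteq> J" unfolding Z0_def by auto
  define tt where "tt w = (SOME t. t\<in>Miss w)" for w
  have tt: "tt w \<in> Miss w" if "w\<in>Z0" for w
  proof -
    have "\<exists>t. t\<in>Miss w" using that unfolding Z0_def by auto
    then show ?thesis unfolding tt_def by (rule someI_ex)
  qed
  have inj: "inj_on tt Z0"
  proof (rule inj_onI)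
    fix w w' assume "w\<in>Z0" "w'\<in>Z0" "tt w = tt w'"
    then show "w = w'" using tt[of w] tt[of w'] Miss_disj Z0J by auto
  qed
  define T where "T = tt ` Z0"
  have cardT: "card T = card Z0" unfolding T_def using inj by (rule card_image)
  have TNy: "T \<subseteq> Ny" and TI: "T \<inter> I = {}" using tt unfolding T_def Miss_def by auto
  have Tuniq: "t = tt w" if wt: "w\<in>J" "t\<in>Miss w" "t\<in>T" for w t
  proof -
    obtain u where u: "u\<in>Z0" "t = tt u" using wt(3) unfolding T_def by auto
    have "u = w" using Miss_disj[of u w t] tt[OF u(1)] u Z0J wt by auto
    then show ?thesis using u by simp
  qed
  have Tadj: "adj E (tt z) w" if "z\<in>Z0" "w\<in>J" "w\<noteq>z" for z w
    using tt[OF that(1)] that unfolding Miss_def by auto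
  have Tnadj: "\<not>adj E (tt z) z" if "z\<in>Z0" for z
    using tt[OF that] unfolding Miss_def by auto
  have conv: "t\<in>Miss w" if zw: "z\<in>J" "w\<in>J" "z\<noteq>w" and t: "t\<in>V" "adj E z t" "\<not>adj E w t"
    and dom: "\<forall>x\<in>V. x\<noteq>w \<longrightarrow> x=z \<or> x=t \<or> adj E x z \<or> adj E x t" for z w t
  proof -
    have "y\<noteq>w" using Jp[OF zw(2)] by simp
    then have "y=z \<or> y=t \<or> adj E y z \<or> adj E y t" using dom y by blast
    moreover have "y\<noteq>z" "\<not>adj E y z" using Jp[OF zw(1)] by auto
    moreover have "y\<noteq>t" using t(2) Jp[OF zw(1)] adj_sym by metis
    ultimately have yt: "adj E y t" by blast
    have tI: "t\<notin>I" using indep t(2) Jp[OF zw(1)] by blast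
    have tw: "\<not>adj E t w" using t(3) adj_sym by metis
    have "adj E t i" if i: "i\<in>J" "i\<noteq>w" for i
    proof -
      have "i=z \<or> i=t \<or> adj E i z \<or> adj E i t" using dom i Jp[OF i(1)] by blast
      moreover have "i\<noteq>t" using tI Jp[OF i(1)] by auto
      moreover have "i=z \<longrightarrow> adj E t i" using t(2) adj_sym by metis
      moreover have "\<not>adj E i z" using indep Jp[OF i(1)] Jp[OF zw(1)] by blast
      ultimately show ?thesis using adj_sym by metis
    qed
    then show ?thesis unfolding Miss_def Ny_def using t(1) yt tI tw by auto
  qed
  have Rex: "(\<exists>t. t\<in>Miss w \<and> (\<forall>x\<in>V. x\<noteq>w \<longrightarrow> x=z \<or> x=t \<or> adj E x z \<or> adj E x t)) \<or>
             (\<exists>t. t\<in>Miss z \<and> (\<forall>x\<in>V. x\<noteq>z \<longrightarrow> x=w \<or> x=t \<or> adj E x w \<or> adj E x t))"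
    if zw: "z\<in>J" "w\<in>J" "z\<noteq>w" for z w
  proof -
    have nzw: "\<not>adj E z w" using indep Jp[OF zw(1)] Jp[OF zw(2)] by blast
    from EC[OF conjunct1[OF Jp[OF zw(1)]] conjunct1[OF Jp[OF zw(2)]] zw(3) nzw] show ?thesis
    proof (elim disjE)
      assume "\<forall>x\<in>V. x=z \<or> x=w \<or> adj E x z \<or> adj E x w"
      then have "y=z \<or> y=w \<or> adj E y z \<or> adj E y w" using y by blast
      then show ?thesis using Jp[OF zw(1)] Jp[OF zw(2)] by auto
    next
      assume "\<exists>t\<in>V. adj E z t \<and> \<not>adj E w t \<and> (\<forall>x\<in>V. x\<noteq>w \<longrightarrow> x=z \<or> x=t \<or> adj E x z \<or> adj E x t)"
      then obtain t where "t\<in>V" "adj E z t" "\<not>adj E w t" "\<forall>x\<in>V. x\<noteq>w \<longrightarrow> x=z \<or> x=t \<or> adj E x z \<or> adj E x t" by blast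
      then show ?thesis using conv[OF zw] by blast
    next
      assume "\<exists>t\<in>V. adj E w t \<and> \<not>adj E z t \<and> (\<forall>x\<in>V. x\<noteq>z \<longrightarrow> x=w \<or> x=t \<or> adj E x w \<or> adj E x t)"
      then obtain t where "t\<in>V" "adj E w t" "\<not>adj E z t" "\<forall>x\<in>V. x\<noteq>z \<longrightarrow> x=w \<or> x=t \<or> adj E x w \<or> adj E x t" by blast
      then show ?thesis using conv[OF zw(2) zw(1) zw(3)[symmetric]] by blast
    qed
  qed
  have P: "z\<in>Z0 \<or> w\<in>Z0" if "z\<in>J" "w\<in>J" "z\<noteq>w" for z w
    using Rex[OF that] that unfolding Z0_def by blast
  have Idec: "I = (K \<union> J) \<union> (I \<inter> {y})" unfolding K_def J_def by auto
  have cardI: "card I = card K + card J + card (I \<inter> {y})"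
  proof -
    have "card I = card (K \<union> J) + card (I \<inter> {y})"
      by (subst Idec, rule card_Un_disjoint) (use finK finJ in \<open>auto simp: K_def J_def yNy\<close>)
    moreover have "card (K \<union> J) = card K + card J"
      by (rule card_Un_disjoint) (use finK finJ in \<open>auto simp: K_def J_def\<close>)
    ultimately show ?thesis by simp
  qed
  have cardKT: "card (K \<union> T) = card K + card Z0"
    using card_Un_disjoint[of K T] finK TNy finNy TI cardT finite_subset unfolding K_def by fastforce
  have KTNy: "K \<union> T \<subseteq> Ny" using TNy unfolding K_def by auto
  have Ky: "K = {}" if "y\<in>I"
    using indep[OF that] unfolding K_def Ny_def by blast
  have lt: "card Ny < card I" using contra unfolding Ny_def by simp
  show False
  proof (cases "Z0 = J")
    case True
    show False
    proof (cases "y\<in>I")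
      case False
      then have "card I = card K + card J" using cardI by simp
      then show False using lt True cardKT card_mono[OF finNy KTNy] by simp
    next
      case yI: True
      have "card (I \<inter> {y}) = 1" using yI by simp
      then have "card Ny \<le> card T" using lt cardI Ky[OF yI] True cardT by simp
      then have NyT: "Ny = T" using card_seteq[OF finNy TNy] by simp
      have clique: "adj E a b" if ab: "a\<in>T" "b\<in>T" "a\<noteq>b" for a b
      proof -
        obtain z w where zw: "z\<in>Z0" "w\<in>Z0" "a = tt z" "b = tt w" using ab unfolding T_def by auto
        have zw': "z\<noteq>w" using zw ab(3) by auto
        have zJ: "z\<in>J" and wJ: "w\<in>J" using zw Z0J by auto
        from Rex[OF zJ wJ zw'] show ?thesis
        proof
          assume "\<exists>t. t\<in>Miss w \<and> (\<forall>x\<in>V. x\<noteq>w \<longrightarrow> x=z \<or> x=t \<or> adj E x z \<or> adj E x t)"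
          then obtain t where t: "t\<in>Miss w" and d: "\<forall>x\<in>V. x\<noteq>w \<longrightarrow> x=z \<or> x=t \<or> adj E x z \<or> adj E x t" by blast
          have "t\<in>T" using t NyT unfolding Miss_def by auto
          then have tb: "t = b" using Tuniq[OF wJ t] zw by simp
          have aV: "a\<in>V" "a\<noteq>w" "a\<noteq>z" using ab(1) TNy NyV Jp[OF wJ] Jp[OF zJ] by auto
          have "\<not>adj E a z" using Tnadj[OF zw(1)] zw by simp
          then show ?thesis using d aV tb ab(3) by blast
        next
          assume "\<exists>t. t\<in>Miss z \<and> (\<forall>x\<in>V. x\<noteq>z \<longrightarrow> x=w \<or> x=t \<or> adj E x w \<or> adj E x t)"
          then obtain t where t: "t\<in>Miss z" and d: "\<forall>x\<in>V. x\<noteq>z \<longrightarrow> x=w \<or> x=t \<or> adj E x w \<or> adj E x t" by blast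
          have "t\<in>T" using t NyT unfolding Miss_def by auto
          then have ta: "t = a" using Tuniq[OF zJ t] zw by simp
          have bV: "b\<in>V" "b\<noteq>w" "b\<noteq>z" using ab(2) TNy NyV Jp[OF wJ] Jp[OF zJ] by auto
          have "\<not>adj E b w" using Tnadj[OF zw(2)] zw by simp
          then have "adj E b a" using d bV ta ab(3) by blast
          then show ?thesis using adj_sym by metis
        qed
      qed
      obtain t where t: "t\<in>V" "adj E y t" using NB[OF y] by blast
      obtain x where x: "x\<in>V" "adj E y x" "x\<noteq>t" "\<not>adj E x t" using F1[OF y t] by blast
      have "x\<in>T" "t\<in>T" using x t NyT unfolding Ny_def by auto
      then show False using clique x(3,4) by blast
    qed
  next
    case False
    obtain zs where zs: "zs\<in>J" "zs\<notin>Z0" using False Z0J by blast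
    have JZ: "J = insert zs Z0"
    proof
      show "J \<subseteq> insert zs Z0" using P zs by blast
      show "insert zs Z0 \<subseteq> J" using zs Z0J by blast
    qed
    have finZ0: "finite Z0" using finJ Z0J finite_subset by blast
    have cardJ: "card J = card Z0 + 1" using JZ zs(2) finZ0 by simp
    have dir: "\<exists>t. t\<in>Miss z \<and> (\<forall>x\<in>V. x\<noteq>z \<longrightarrow> x=zs \<or> x=t \<or> adj E x zs \<or> adj E x t)" if z: "z\<in>Z0" for z
    proof -
      have zJ: "z\<in>J" using z Z0J by auto
      have "zs\<noteq>z" using z zs by auto
      from Rex[OF zs(1) zJ this] show ?thesis
      proof
        assume "\<exists>t. t\<in>Miss zs \<and> (\<forall>x\<in>V. x\<noteq>zs \<longrightarrow> x=z \<or> x=t \<or> adj E x z \<or> adj E x t)"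
        then have "zs\<in>Z0" using zs(1) unfolding Z0_def by blast
        then show ?thesis using zs by simp
      qed
    qed
    have Tzs: "adj E t zs" if "t\<in>T" for t
      using that Tadj zs unfolding T_def by auto
    show False
    proof (cases "y\<in>I")
      case False
      then have "card I = card K + card Z0 + 1" using cardI cardJ by simp
      then have "card Ny \<le> card (K \<union> T)" using lt cardKT by simp
      then have NyKT: "Ny = K \<union> T" using card_seteq[OF finNy KTNy] by simp
      have inT: "t\<in>T" if "t\<in>Ny" "t\<notin>I" for t using that NyKT unfolding K_def by auto
      show False
      proof (cases "Z0 = {}")
        case True
        then have NyK: "Ny = K" using NyKT T_def by simp
        show False
        proof (rule one[OF y])
          show "zs\<in>V" "zs\<noteq>y" "\<not>adj E y zs" using Jp[OF zs(1)] by auto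
          show "\<forall>k\<in>V. adj E y k \<longrightarrow> \<not>adj E k zs"
            using NyK Jp[OF zs(1)] indep unfolding Ny_def K_def by blast
          show "\<forall>k\<in>V. \<forall>k'\<in>V. adj E y k \<longrightarrow> adj E y k' \<longrightarrow> \<not>adj E k k'"
            using NyK indep unfolding Ny_def K_def by blast
        qed
      next
        case False
        then obtain z0 where z0: "z0\<in>Z0" by blast
        have z0J: "z0\<in>J" using z0 Z0J by auto
        define a where "a = tt z0"
        have aT: "a\<in>T" unfolding a_def T_def using z0 by simp
        have aV: "a\<in>V" "adj E y a" using aT TNy unfolding Ny_def by auto
        obtain x where x: "x\<in>V" "adj E y x" "x\<noteq>a" "\<not>adj E x a" using F1[OF y aV] by blast
        have xNy: "x\<in>Ny" using x unfolding Ny_def by simp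
        have xz0: "x\<noteq>z0" using xNy Jp[OF z0J] by auto
        show False
        proof (cases "x\<in>K")
          case True
          obtain t where t: "t\<in>Miss z0" and d: "\<forall>x\<in>V. x\<noteq>z0 \<longrightarrow> x=zs \<or> x=t \<or> adj E x zs \<or> adj E x t"
            using dir[OF z0] by blast
          have "t\<in>T" using inT t unfolding Miss_def by auto
          then have ta: "t = a" using Tuniq[OF z0J t] a_def by simp
          have "x\<noteq>zs" using xNy Jp[OF zs(1)] by auto
          moreover have "\<not>adj E x zs" using True indep Jp[OF zs(1)] unfolding K_def by blast
          ultimately show False using d x xz0 ta by blast
        next
          case False
          then have "x\<in>T" using xNy NyKT by simp
          then obtain w where w: "w\<in>Z0" "x = tt w" unfolding T_def by auto
          have wJ: "w\<in>J" using w Z0J by auto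
          have wz0: "w\<noteq>z0" using w x(3) a_def by auto
          from Rex[OF wJ z0J wz0] show False
          proof
            assume "\<exists>t. t\<in>Miss z0 \<and> (\<forall>x\<in>V. x\<noteq>z0 \<longrightarrow> x=w \<or> x=t \<or> adj E x w \<or> adj E x t)"
            then obtain t where t: "t\<in>Miss z0" and d: "\<forall>x\<in>V. x\<noteq>z0 \<longrightarrow> x=w \<or> x=t \<or> adj E x w \<or> adj E x t" by blast
            have "t\<in>T" using inT t unfolding Miss_def by auto
            then have ta: "t = a" using Tuniq[OF z0J t] a_def by simp
            have "x\<noteq>w" using xNy Jp[OF wJ] by auto
            moreover have "\<not>adj E x w" using Tnadj[OF w(1)] w by simp
            ultimately show False using d x xz0 ta by blast
          next
            assume "\<exists>t. t\<in>Miss w \<and> (\<forall>x\<in>V. x\<noteq>w \<longrightarrow> x=z0 \<or> x=t \<or> adj E x z0 \<or> adj E x t)"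
            then obtain t where t: "t\<in>Miss w" and d: "\<forall>x\<in>V. x\<noteq>w \<longrightarrow> x=z0 \<or> x=t \<or> adj E x z0 \<or> adj E x t" by blast
            have "t\<in>T" using inT t unfolding Miss_def by auto
            then have tx: "t = x" using Tuniq[OF wJ t] w by simp
            have "a\<noteq>w" "a\<noteq>z0" using aT TNy Jp[OF wJ] Jp[OF z0J] by auto
            moreover have "\<not>adj E a z0" using Tnadj[OF z0] a_def by simp
            ultimately have "adj E a x" using d aV tx x(3) by blast
            then show False using x(4) adj_sym by metis
          qed
        qed
      qed
    next
      case yI: True
      have K0: "K = {}" using Ky[OF yI] .
      have "card (I \<inter> {y}) = 1" using yI by simp
      then have ltZ: "card Ny < card Z0 + 2" using lt cardI cardJ K0 by simp
      obtain a b where ab: "a\<in>V" "b\<in>V" "adj E a b" "a\<noteq>zs" "b\<noteq>zs" "\<not>adj E a zs" "\<not>adj E b zs"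
        and d: "\<forall>x\<in>V. x\<noteq>zs \<longrightarrow> x=a \<or> x=b \<or> adj E x a \<or> adj E x b"
        using VC[OF conjunct1[OF Jp[OF zs(1)]]] by blast
      have noy: "y\<noteq>p" if pq: "p\<in>V" "q\<in>V" "adj E p q" "\<not>adj E q zs"
        and dpq: "\<forall>x\<in>V. x\<noteq>zs \<longrightarrow> x=p \<or> x=q \<or> adj E x p \<or> adj E x q" for p q
      proof
        assume yp: "y = p"
        have qNy: "q\<in>Ny" using pq yp unfolding Ny_def by simp
        have qI: "q\<notin>I" using indep yI pq(3) yp by blast
        have "adj E q i" if i: "i\<in>J" "i\<noteq>zs" for i
        proof -
          have "i=p \<or> i=q \<or> adj E i p \<or> adj E i q" using dpq i Jp[OF i(1)] by blast
          moreover have "i\<noteq>p" using Jp[OF i(1)] yp by auto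
          moreover have "i\<noteq>q" using Jp[OF i(1)] qNy by auto
          moreover have "\<not>adj E i p" using Jp[OF i(1)] yp adj_sym by metis
          ultimately show ?thesis using adj_sym by metis
        qed
        then have "q\<in>Miss zs" unfolding Miss_def using qNy qI pq(4) by blast
        then have "zs\<in>Z0" using zs(1) unfolding Z0_def by blast
        then show False using zs(2) by simp
      qed
      have ya: "y\<noteq>a" using noy[OF ab(1,2,3,7) d] .
      have yb: "y\<noteq>b"
      proof (rule noy[OF ab(2,1)])
        show "adj E b a" using ab(3) adj_sym by metis
        show "\<not>adj E a zs" using ab(6) .
        show "\<forall>x\<in>V. x\<noteq>zs \<longrightarrow> x=b \<or> x=a \<or> adj E x b \<or> adj E x a" using d by blast
      qed
      have "y\<noteq>zs" using Jp[OF zs(1)] by auto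
      then have "adj E y a \<or> adj E y b" using d y ya yb by blast
      then obtain x where x: "x\<in>V" "adj E y x" "\<not>adj E x zs" using ab by blast
      have xNy: "x\<in>Ny" using x unfolding Ny_def by simp
      have xT: "x\<notin>T" using Tzs x(3) by blast
      have finT: "finite T" using finNy TNy finite_subset by blast
      have "insert x T \<subseteq> Ny" using xNy TNy by simp
      moreover have "card (insert x T) = card Z0 + 1" using xT finT cardT by simp
      ultimately have NyxT: "insert x T = Ny" using card_seteq[OF finNy, of "insert x T"] ltZ by linarith
      obtain x' where x': "x'\<in>V" "adj E y x'" "x'\<noteq>x" "\<not>adj E x' x" using F1[OF y x(1,2)] by blast
      have "x'\<in>insert x T" using x' NyxT unfolding Ny_def by auto
      then have "x'\<in>T" using x'(3) by simp
      then obtain z where z: "z\<in>Z0" "x' = tt z" unfolding T_def by auto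
      have zJ: "z\<in>J" using z Z0J by auto
      obtain t where t: "t\<in>Miss z" and dt: "\<forall>x\<in>V. x\<noteq>z \<longrightarrow> x=zs \<or> x=t \<or> adj E x zs \<or> adj E x t"
        using dir[OF z(1)] by blast
      have "zs\<noteq>z" using z zs by auto
      then have "adj E t zs" using t zs(1) unfolding Miss_def by blast
      then have "t\<noteq>x" using x(3) by metis
      moreover have "t\<in>insert x T" using t NyxT unfolding Miss_def by auto
      ultimately have "t\<in>T" by simp
      then have tx': "t = x'" using Tuniq[OF zJ t] z by simp
      have "x\<noteq>z" "x\<noteq>zs" using xNy Jp[OF zJ] Jp[OF zs(1)] by auto
      then have "adj E x x'" using dt x(1,3) tx' x'(3) by blast
      then show False using x'(4) adj_sym by metis
    qed
  qed
qed

end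

lemma walk_step:
  assumes "walk_in E S p" "hd p \<noteq> last p"
  shows "adj E (hd p) (p!1) \<and> p!1 \<in> S"
proof -
  have ne: "p \<noteq> []" and sub: "set p \<subseteq> S" and st: "\<forall>i. Suc i < length p \<longrightarrow> adj E (p ! i) (p ! Suc i)"
    using assms(1) unfolding walk_in_def by auto
  have "length p \<noteq> 1"
  proof
    assume "length p = 1"
    then obtain c where "p = [c]" by (cases p) auto
    then show False using assms(2) by simp
  qed
  moreover have "length p > 0" using ne by simp
  ultimately have l: "Suc 1 \<le> length p" by linarith
  then have "adj E (p!0) (p!1)" using st by simp
  moreover have "p!0 = hd p" using ne by (simp add: hd_conv_nth)
  moreover have "p!1 \<in> set p" using l by (intro nth_mem) simp
  then have "p!1 \<in> S" using sub by auto
  ultimately show ?thesis by simp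
qed

lemma walk_mono:
  assumes "walk_in E S p" "\<forall>u v. adj E u v \<longrightarrow> adj E' u v"
  shows "walk_in E' S p"
  using assms unfolding walk_in_def by blast

lemma connected_on_mono:
  assumes "connected_on E S" "\<forall>u v. adj E u v \<longrightarrow> adj E' u v"
  shows "connected_on E' S"
proof -
  have ne: "S \<noteq> {}" using assms(1) by (simp add: connected_on_def)
  have walks: "\<forall>u\<in>S. \<forall>v\<in>S. \<exists>p. walk_in E S p \<and> hd p = u \<and> last p = v"
    using assms(1) by (simp add: connected_on_def)
  show ?thesis unfolding connected_on_def
  proof (intro conjI ballI)
    show "S \<noteq> {}" by (rule ne)
    fix u v assume "u\<in>S" "v\<in>S"
    then obtain p where p: "walk_in E S p" "hd p = u" "last p = v" using walks by blast
    have "walk_in E' S p" using walk_mono[OF p(1) assms(2)] .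
    then show "\<exists>p. walk_in E' S p \<and> hd p = u \<and> last p = v" using p(2,3) by blast
  qed
qed

lemma cds_pair:
  assumes "a\<in>V" "b\<in>V" "a = b \<or> adj E a b" "\<forall>x\<in>V. x=a \<or> x=b \<or> adj E x a \<or> adj E x b"
  shows "connected_dominating V E {a,b}"
proof -
  have "dominating V E {a,b}" using assms unfolding dominating_def by auto
  moreover have "connected_on E {a,b}"
    unfolding connected_on_def
  proof (intro conjI ballI)
    show "{a,b} \<noteq> {}" by simp
    fix u v assume uv: "u\<in>{a,b}" "v\<in>{a,b}"
    show "\<exists>p. walk_in E {a, b} p \<and> hd p = u \<and> last p = v"
    proof (cases "u = v")
      case True
      then show ?thesis using uv by (intro exI[of _ "[u]"]) (auto simp: walk_in_def)
    next
      case False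
      then have ab': "a \<noteq> b" using uv by auto
      then have "adj E a b" using assms(3) by simp
      then have "adj E u v" using uv False adj_sym[of E a b] by auto
      then show ?thesis using uv
        by (intro exI[of _ "[u,v]"]) (auto simp: walk_in_def less_Suc_eq)
    qed
  qed
  ultimately show ?thesis unfolding connected_dominating_def by simp
qed

lemma gamma_le:
  assumes "connected_dominating V E D"
  shows "gamma_c V E \<le> card D"
  unfolding gamma_c_def using assms by (intro Least_le) blast

lemma gamma_ex:
  assumes "connected_dominating V E D0"
  shows "\<exists>D. connected_dominating V E D \<and> card D = gamma_c V E"
proof -
  have "\<exists>k. \<exists>D. connected_dominating V E D \<and> card D = k" using assms by blast
  from LeastI_ex[OF this] show ?thesis unfolding gamma_c_def .
qed

lemma G2_of:
  assumes g: "gamma_c V E = 3" and ab: "a\<in>V" "b\<in>V" "a = b \<or> adj E a b"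
  shows "\<exists>x\<in>V. x\<noteq>a \<and> x\<noteq>b \<and> \<not>adj E x a \<and> \<not>adj E x b"
proof (rule ccontr)
  assume "\<not> ?thesis"
  then have "\<forall>x\<in>V. x=a \<or> x=b \<or> adj E x a \<or> adj E x b" by blast
  then have "connected_dominating V E {a,b}" by (rule cds_pair[OF ab])
  then have "gamma_c V E \<le> card {a,b}" by (rule gamma_le)
  moreover have "card {a,b} \<le> 2" by (simp add: card_insert_if)
  ultimately show False using g by simp
qed

lemma small_set:
  assumes "finite D" "D \<noteq> {}" "card D < 3"
  shows "(\<exists>w. D = {w}) \<or> (\<exists>a b. a \<noteq> b \<and> D = {a,b})"
proof -
  have "card D = 1 \<or> card D = 2" using assms by (cases "card D") (auto simp: card_eq_0_iff)
  then show ?thesis by (auto simp: card_1_singleton_iff card_2_iff)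
qed

lemma conn_pair_adj:
  assumes "connected_on E {a,b}" "a \<noteq> b"
  shows "adj E a b"
proof -
  obtain p where p: "walk_in E {a,b} p" "hd p = a" "last p = b"
    using assms(1) unfolding connected_on_def by blast
  then have "adj E a (p!1) \<and> p!1 \<in> {a,b}" using walk_step[of E "{a,b}" p] assms(2) by simp
  moreover have "p!1 \<noteq> a"
  proof
    assume "p!1 = a"
    then show False using \<open>adj E a (p!1) \<and> p!1 \<in> {a,b}\<close> adj_irr[of E a] by simp
  qed
  ultimately show ?thesis by auto
qed

lemma adj_del: "adj (del_vertex_edges E v) x y \<longleftrightarrow> adj E x y \<and> x \<noteq> v \<and> y \<noteq> v"
  unfolding adj_def del_vertex_edges_def by auto

lemma adj_ins:
  assumes "u \<noteq> v"
  shows "adj (insert {u,v} E) x y \<longleftrightarrow> adj E x y \<or> (x=u \<and> y=v) \<or> (x=v \<and> y=u)"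
  using assms unfolding adj_def by (auto simp: doubleton_eq_iff)

lemma ec_side:
  assumes g: "gamma_c V E = 3" and uv: "u\<in>V" "v\<in>V" "u\<noteq>v"
    and b: "b\<in>V" "b\<noteq>u" "b\<noteq>v" "adj (insert {u,v} E) u b"
    and dom: "\<forall>x\<in>V. x=u \<or> x=b \<or> adj (insert {u,v} E) x u \<or> adj (insert {u,v} E) x b"
  shows "\<exists>t\<in>V. adj E u t \<and> \<not>adj E v t \<and> (\<forall>x\<in>V. x\<noteq>v \<longrightarrow> x=u \<or> x=t \<or> adj E x u \<or> adj E x t)"
proof -
  have ub: "adj E u b" using b(4) adj_ins[OF uv(3)] b(2,3) by auto
  have d: "\<forall>x\<in>V. x\<noteq>v \<longrightarrow> x=u \<or> x=b \<or> adj E x u \<or> adj E x b"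
    using dom adj_ins[OF uv(3)] b(2,3) by auto
  have "\<not>adj E v b"
  proof
    assume vb: "adj E v b"
    obtain x where x: "x\<in>V" "x\<noteq>u" "x\<noteq>b" "\<not>adj E x u" "\<not>adj E x b"
      using G2_of[OF g uv(1) b(1)] ub by blast
    show False using x d vb by (cases "x = v") auto
  qed
  then show ?thesis using ub d b(1) by blast
qed

lemma mvc_of:
  assumes H: "maximal_vertex_critical 3 V E"
  shows "mvc V E"
proof -
  from H have ec: "edge_critical 3 V E" and vc: "vertex_critical 3 V E"
    unfolding maximal_vertex_critical_def by auto
  have cg: "connected_graph V E" and g: "gamma_c V E = 3"
    and ecr: "\<forall>u\<in>V. \<forall>v\<in>V. u \<noteq> v \<and> \<not>adj E u v \<longrightarrow> gamma_c V (insert {u,v} E) < 3"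
    using ec unfolding edge_critical_def by auto
  have tc: "two_connected V E"
    and vcr: "\<forall>v\<in>V. gamma_c (V - {v}) (del_vertex_edges E v) < 3"
    using vc unfolding vertex_critical_def by auto
  have c3: "card V \<ge> 3" and cgv: "\<forall>v\<in>V. connected_graph (V - {v}) (del_vertex_edges E v)"
    using tc unfolding two_connected_def by auto
  have fin: "finite V" and con: "connected_on E V"
    using cg unfolding connected_graph_def simple_graph_def by auto
  have G2: "\<exists>x\<in>V. x\<noteq>a \<and> x\<noteq>b \<and> \<not>adj E x a \<and> \<not>adj E x b"
    if "a\<in>V" "b\<in>V" "a = b \<or> adj E a b" for a b
    using G2_of[OF g that] .
  have NB: "\<exists>u\<in>V. adj E v u" if v: "v\<in>V" for v
  proof -
    have "\<exists>w\<in>V. w \<noteq> v"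
    proof (rule ccontr)
      assume "\<not> ?thesis"
      then have "V \<subseteq> {v}" by blast
      then have "card V \<le> card {v}" using card_mono[of "{v}" V] by simp
      then show False using c3 by simp
    qed
    then obtain w where w: "w\<in>V" "w\<noteq>v" by blast
    obtain p where p: "walk_in E V p" "hd p = v" "last p = w"
      using con v w(1) unfolding connected_on_def by blast
    have "adj E (hd p) (p!1) \<and> p!1 \<in> V" using walk_step[OF p(1)] p(2,3) w(2) by simp
    then show ?thesis using p(2) by blast
  qed
  have VC: "\<exists>a\<in>V. \<exists>b\<in>V. adj E a b \<and> a\<noteq>v \<and> b\<noteq>v \<and> \<not>adj E a v \<and> \<not>adj E b v \<and>
              (\<forall>x\<in>V. x\<noteq>v \<longrightarrow> x=a \<or> x=b \<or> adj E x a \<or> adj E x b)" if v: "v\<in>V" for v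
  proof -
    define V' where "V' = V - {v}"
    define E' where "E' = del_vertex_edges E v"
    have "connected_graph V' E'" using cgv v unfolding V'_def E'_def by simp
    then have "connected_on E' V'" unfolding connected_graph_def by simp
    moreover have "dominating V' E' V'" unfolding dominating_def by simp
    ultimately have "connected_dominating V' E' V'" unfolding connected_dominating_def by simp
    from gamma_ex[OF this] obtain D where D: "connected_dominating V' E' D" "card D = gamma_c V' E'" by blast
    have lt: "card D < 3" using D(2) vcr v unfolding V'_def E'_def by simp
    have DV: "D \<subseteq> V'" and dom: "\<forall>x\<in>V'. x\<in>D \<or> (\<exists>d\<in>D. adj E' x d)" and cD: "connected_on E' D"
      using D(1) unfolding connected_dominating_def dominating_def by auto
    have Dne: "D \<noteq> {}" using cD unfolding connected_on_def by simp
    have finD: "finite D" using DV fin finite_subset unfolding V'_def by blast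
    have aE: "adj E x y \<and> x \<noteq> v \<and> y \<noteq> v" if "adj E' x y" for x y
      using that adj_del unfolding E'_def by metis
    from small_set[OF finD Dne lt] show ?thesis
    proof
      assume "\<exists>w. D = {w}"
      then obtain w where Dw: "D = {w}" by blast
      have wV: "w\<in>V" "w\<noteq>v" using DV Dw unfolding V'_def by auto
      have dw: "\<forall>x\<in>V. x\<noteq>v \<longrightarrow> x = w \<or> adj E x w" using dom Dw aE unfolding V'_def by blast
      show ?thesis
      proof (cases "adj E v w")
        case True
        obtain x where x: "x\<in>V" "x\<noteq>w" "\<not>adj E x w" using G2[OF wV(1) wV(1)] by blast
        show ?thesis using x dw True by (cases "x = v") auto
      next
        case False
        obtain u where u: "u\<in>V" "adj E v u" using NB[OF v] by blast
        have uw: "u \<noteq> w" using u False by auto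
        have uv: "u \<noteq> v" using u(2) adj_irr by metis
        have "adj E u w" using dw u(1) uv uw by blast
        then have "adj E w u" using adj_sym by metis
        then obtain x where x: "x\<in>V" "x\<noteq>w" "x\<noteq>u" "\<not>adj E x w" "\<not>adj E x u"
          using G2[OF wV(1) u(1)] by blast
        show ?thesis using x dw u(2) by (cases "x = v") auto
      qed
    next
      assume "\<exists>a b. a \<noteq> b \<and> D = {a,b}"
      then obtain a b where ab: "a \<noteq> b" "D = {a,b}" by blast
      have "adj E' a b" using conn_pair_adj[of E' a b] cD ab by simp
      then have abE: "adj E a b" "a\<noteq>v" "b\<noteq>v" using aE by auto
      have abV: "a\<in>V" "b\<in>V" using DV ab unfolding V'_def by auto
      have d: "\<forall>x\<in>V. x\<noteq>v \<longrightarrow> x=a \<or> x=b \<or> adj E x a \<or> adj E x b"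
        using dom ab aE unfolding V'_def by blast
      have na: "\<not>adj E a v"
      proof
        assume av: "adj E a v"
        obtain x where x: "x\<in>V" "x\<noteq>a" "x\<noteq>b" "\<not>adj E x a" "\<not>adj E x b"
          using G2[OF abV] abE(1) by blast
        show False using x d av adj_sym[of E a v] by (cases "x = v") auto
      qed
      have nb: "\<not>adj E b v"
      proof
        assume bv: "adj E b v"
        obtain x where x: "x\<in>V" "x\<noteq>a" "x\<noteq>b" "\<not>adj E x a" "\<not>adj E x b"
          using G2[OF abV] abE(1) by blast
        show False using x d bv adj_sym[of E b v] by (cases "x = v") auto
      qed
      show ?thesis using abV abE na nb d by blast
    qed
  qed
  have EC: "(\<forall>x\<in>V. x=u \<or> x=v \<or> adj E x u \<or> adj E x v) \<or>
              (\<exists>t\<in>V. adj E u t \<and> \<not>adj E v t \<and> (\<forall>x\<in>V. x\<noteq>v \<longrightarrow> x=u \<or> x=t \<or> adj E x u \<or> adj E x t)) \<or>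
              (\<exists>t\<in>V. adj E v t \<and> \<not>adj E u t \<and> (\<forall>x\<in>V. x\<noteq>u \<longrightarrow> x=v \<or> x=t \<or> adj E x v \<or> adj E x t))"
    if uv: "u\<in>V" "v\<in>V" "u\<noteq>v" "\<not>adj E u v" for u v
  proof -
    define E' where "E' = insert {u,v} E"
    have ai: "adj E' x y \<longleftrightarrow> adj E x y \<or> (x=u \<and> y=v) \<or> (x=v \<and> y=u)" for x y
      unfolding E'_def using adj_ins[OF uv(3)] .
    have E'sym: "E' = insert {v,u} E" unfolding E'_def by (simp add: insert_commute)
    have "connected_on E' V" using connected_on_mono[OF con] ai by blast
    moreover have "dominating V E' V" unfolding dominating_def by simp
    ultimately have "connected_dominating V E' V" unfolding connected_dominating_def by simp
    from gamma_ex[OF this] obtain D where D: "connected_dominating V E' D" "card D = gamma_c V E'" by blast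
    have lt: "card D < 3" using D(2) ecr uv unfolding E'_def by simp
    have DV: "D \<subseteq> V" and dom: "\<forall>x\<in>V. x\<in>D \<or> (\<exists>d\<in>D. adj E' x d)" and cD: "connected_on E' D"
      using D(1) unfolding connected_dominating_def dominating_def by auto
    have Dne: "D \<noteq> {}" using cD unfolding connected_on_def by simp
    have finD: "finite D" using DV fin finite_subset by blast
    from small_set[OF finD Dne lt] show ?thesis
    proof
      assume "\<exists>w. D = {w}"
      then obtain w where Dw: "D = {w}" by blast
      have wV: "w\<in>V" using DV Dw by auto
      have dw: "\<forall>x\<in>V. x = w \<or> adj E' x w" using dom Dw by blast
      show ?thesis
      proof (cases "w = u \<or> w = v")
        case True
        then have "\<forall>x\<in>V. x=u \<or> x=v \<or> adj E x u \<or> adj E x v" using dw ai by blast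
        then show ?thesis by blast
      next
        case False
        then have "\<forall>x\<in>V. x = w \<or> adj E x w" using dw ai by blast
        moreover obtain x where "x\<in>V" "x\<noteq>w" "\<not>adj E x w" using G2[OF wV wV] by blast
        ultimately show ?thesis by blast
      qed
    next
      assume "\<exists>a b. a \<noteq> b \<and> D = {a,b}"
      then obtain a b where ab: "a \<noteq> b" "D = {a,b}" by blast
      have aab: "adj E' a b" using conn_pair_adj[of E' a b] cD ab by simp
      have abV: "a\<in>V" "b\<in>V" using DV ab by auto
      have d: "\<forall>x\<in>V. x=a \<or> x=b \<or> adj E' x a \<or> adj E' x b" using dom ab by blast
      have d': "\<forall>x\<in>V. x=b \<or> x=a \<or> adj E' x b \<or> adj E' x a" using d by blast
      have aba: "adj E' b a" using aab adj_sym by metis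
      show ?thesis
      proof (cases "(a=u \<and> b=v) \<or> (a=v \<and> b=u)")
        case True
        then have "\<forall>x\<in>V. x=u \<or> x=v \<or> adj E x u \<or> adj E x v" using d ai by blast
        then show ?thesis by blast
      next
        case nuv: False
        show ?thesis
        proof (cases "a = u")
          case True
          have "b \<noteq> v" using nuv True by blast
          then have "\<exists>t\<in>V. adj E u t \<and> \<not>adj E v t \<and> (\<forall>x\<in>V. x\<noteq>v \<longrightarrow> x=u \<or> x=t \<or> adj E x u \<or> adj E x t)"
            using ec_side[OF g uv(1,2,3) abV(2)] ab(1) True aab d unfolding E'_def by blast
          then show ?thesis by blast
        next
          case au: False
          show ?thesis
          proof (cases "b = u")
            case True
            have "a \<noteq> v" using nuv True by blast
            then have "\<exists>t\<in>V. adj E u t \<and> \<not>adj E v t \<and> (\<forall>x\<in>V. x\<noteq>v \<longrightarrow> x=u \<or> x=t \<or> adj E x u \<or> adj E x t)"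
              using ec_side[OF g uv(1,2,3) abV(1)] ab(1) True aba d' unfolding E'_def by blast
            then show ?thesis by blast
          next
            case bu: False
            show ?thesis
            proof (cases "a = v")
              case True
              have "b \<noteq> u" using bu by blast
              then have "\<exists>t\<in>V. adj E v t \<and> \<not>adj E u t \<and> (\<forall>x\<in>V. x\<noteq>u \<longrightarrow> x=v \<or> x=t \<or> adj E x v \<or> adj E x t)"
                using ec_side[OF g uv(2,1) uv(3)[symmetric] abV(2)] ab(1) True aab d E'sym by blast
              then show ?thesis by blast
            next
              case av: False
              show ?thesis
              proof (cases "b = v")
                case True
                then have "\<exists>t\<in>V. adj E v t \<and> \<not>adj E u t \<and> (\<forall>x\<in>V. x\<noteq>u \<longrightarrow> x=v \<or> x=t \<or> adj E x v \<or> adj E x t)"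
                  using ec_side[OF g uv(2,1) uv(3)[symmetric] abV(1)] ab(1) au aba d' E'sym by blast
                then show ?thesis by blast
              next
                case bv: False
                have "adj E a b" using aab ai au av by blast
                moreover have "\<forall>x\<in>V. x=a \<or> x=b \<or> adj E x a \<or> adj E x b" using d ai au av bu bv by blast
                ultimately show ?thesis using G2[OF abV] by blast
              qed
            qed
          qed
        qed
      qed
    qed
  qed
  show ?thesis
    by (rule mvc.intro) (use fin G2 VC EC NB in \<open>blast+\<close>)
qed

theorem theorem3p3:
  fixes V :: "'a set" and E :: "'a set set"
  assumes "maximal_vertex_critical 3 V E"
  shows "independence_number V E \<le> min_degree V E"
proof -
  interpret mvc V E by (rule mvc_of[OF assms])
  have c3: "card V \<ge> 3" using assms
    unfolding maximal_vertex_critical_def vertex_critical_def two_connected_def by auto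
  have Vne: "V \<noteq> {}" using c3 by auto
  have "Min (degree V E ` V) \<in> degree V E ` V" using Min_in fin Vne by simp
  then obtain y where y: "y\<in>V" "min_degree V E = degree V E y"
    unfolding min_degree_def by auto
  define S where "S = {card I |I. independent V E I}"
  have finS: "finite S"
  proof -
    have "S \<subseteq> card ` Pow V" unfolding S_def independent_def by auto
    then show ?thesis using fin finite_subset by blast
  qed
  have neS: "S \<noteq> {}" unfolding S_def independent_def by auto
  have "\<forall>k\<in>S. k \<le> degree V E y"
    unfolding S_def degree_def using main[OF y(1)] by auto
  then have "Max S \<le> degree V E y" using Max_le_iff[OF finS neS] by blast
  then show ?thesis unfolding independence_number_def S_def[symmetric] using y(2) by simp
qed

end
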